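(* Let $\theta_0:\mathbb{R}^d\to\mathbb{R}^{d_\theta}$ be measurable and for each $N\ge1$ let $\hat\theta_N$ be a (possibly random) $\mathbb{R}^{d_\theta}$-valued estimator built from data independent of $X^s,X^t$. Suppose (i) $\|\hat\theta_N(X^s)\|_\infty\le\xi_N$ a.s. for every $N\ge1$; (ii) $\mathbb{E}\|\theta_0(X^s)\|_\infty^8<\infty$; (iii) there are constants $c>0$, $m\ge0$ with $r_0(x)\le c\exp(m\|x\|_\infty)$ for all $x$; (iv) $\mathbb{E}[r_0(X^s)^2]<\infty$; (v) $\mathbb{E}\exp(\varsigma\|X^s\|_\infty^2)<\infty$ for some constant $\varsigma>0$. Then for $N\ge2$, $$\mathbb{E}\|\hat\theta_N(X^t)-\theta_0(X^t)\|_2^2=\mathbb{E}\big[\|\hat\theta_N(X^s)-\theta_0(X^s)\|_2^2r_0(X^s)\big]\le c_1\exp\{c_2(\log N)^{1/2}\}\,\mathbb{E}\|\hat\theta_N(X^s)-\theta_0(X^s)\|_2^2+\frac{c_3d_\theta(\xi_N^2+1)}{N},$$ with constants $c_1,c_2,c_3$ not depending on $N$.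
   Context: $X^s,X^t$ are random vectors in $\mathbb{R}^d$ with Lebesgue densities $p,q$, $\{q>0\}\subset\{p>0\}$, and density ratio $r_0=q/p$ (with $0/0=0$). Expectations are over both the test point and the randomness of $\hat\theta_N$. *)

theory Defs
  imports "HOL-Probability.Probability"
begin

definition linf_norm :: "real ^ 'n \<Rightarrow> real" where
  "linf_norm x = Max (range (\<lambda>i. \<bar>x $ i\<bar>))"

definition density_ratio :: "('a \<Rightarrow> real) \<Rightarrow> ('a \<Rightarrow> real) \<Rightarrow> 'a \<Rightarrow> real" where
  "density_ratio p q x = (if p x = 0 then 0 else q x / p x)"

end

theory Submission
  imports Defs
begin

lemma comp_le_linf: "\<bar>x $ i\<bar> \<le> linf_norm x"
  unfolding linf_norm_def by (rule Max_ge) auto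

lemma linf_nonneg: "0 \<le> linf_norm x"
  using comp_le_linf[of x] abs_ge_zero order_trans by blast

lemma norm_sq_le: fixes x :: "real ^ 'k"
  shows "(norm x)\<^sup>2 \<le> real CARD('k) * (linf_norm x)\<^sup>2"
proof -
  have "(norm x)\<^sup>2 = (\<Sum>i\<in>UNIV. (x $ i)\<^sup>2)"
    unfolding norm_vec_def L2_set_def by (simp add: sum_nonneg)
  also have "\<dots> \<le> (\<Sum>i\<in>(UNIV::'k set). (linf_norm x)\<^sup>2)"
    apply (rule sum_mono)
    using comp_le_linf[of x] by (metis abs_le_square_iff abs_of_nonneg linf_nonneg power2_abs)
  also have "\<dots> = real CARD('k) * (linf_norm x)\<^sup>2" by simp
  finally show ?thesis .
qed

lemma linf_meas: "linf_norm \<in> borel_measurable borel"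
  unfolding linf_norm_def by (rule borel_measurable_Max) auto

lemma dr_nonneg: "(\<And>x. p x \<ge> 0) \<Longrightarrow> (\<And>x. q x \<ge> 0) \<Longrightarrow> density_ratio p q x \<ge> 0"
  unfolding density_ratio_def by auto

lemma dr_meas:
  assumes [measurable]: "p \<in> borel_measurable M" "q \<in> borel_measurable M"
  shows "density_ratio p q \<in> borel_measurable M"
  unfolding density_ratio_def by measurable

lemma amgm2: fixes A B :: real shows "2*(A*B) \<le> A\<^sup>2 + B\<^sup>2"
proof -
  have "0 \<le> (A-B)\<^sup>2" by simp
  then show ?thesis by (simp add: power2_diff)
qed
lemma p48: fixes L :: real shows "(L^4)\<^sup>2 = L^8"
  by (simp only: power_mult[symmetric]) simp
lemma p24: fixes L :: real shows "(L\<^sup>2)\<^sup>2 = L^4"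
  by (simp only: power_mult[symmetric]) simp
lemma p24b: fixes L N :: real shows "(L\<^sup>2 * N)\<^sup>2 = L^4 * N\<^sup>2"
  by (simp only: power_mult_distrib p24)

lemma lin3: fixes c y X :: real shows "c*y*X + c*X = (c*(y+1))*X"
  by (simp add: algebra_simps)

lemma tail_bound:
  fixes N \<xi> k a b r L E :: real
  assumes "N \<ge> 1" "\<xi> \<ge> 0" "k \<ge> 0" "r \<ge> 0" "L \<ge> 0" "N^4 \<le> E"
    "a \<le> k * \<xi>\<^sup>2" "b \<le> k * L\<^sup>2" "a \<ge> 0" "b \<ge> 0"
  shows "(2*a+2*b) * r \<le> k * (\<xi>\<^sup>2+1) / N * (r\<^sup>2 + E + L^8)"
proof -
  have "N^2 \<le> N^4" using assms(1) by (intro power_increasing) auto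
  then have N2: "N\<^sup>2 \<le> E" using assms(6) by linarith
  have s1: "2*(r*N) \<le> r\<^sup>2 + E" using amgm2[of r N] N2 by linarith
  have s2: "2*(L^4 * N\<^sup>2) \<le> L^8 + E" using amgm2[of "L^4" "N\<^sup>2"] p48[of L] p24[of N] assms(6) by linarith
  have s3: "2*((L\<^sup>2*N)*r) \<le> L^4*N\<^sup>2 + r\<^sup>2" using amgm2[of "L\<^sup>2*N" r] p24b[of L N] by linarith
  have "0 \<le> N^4" using assms(1) by simp
  then have E0: "E \<ge> 0" using assms(6) by linarith
  have L8: "0 \<le> L^8" using assms(5) by simp
  have Npos: "N > 0" using assms(1) by simp
  have t1: "2*r \<le> (r\<^sup>2 + E + L^8) / N"
  proof -
    have e0: "2*r*N = 2*(r*N)" by (simp add: mult.assoc)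
    have "2*r*N \<le> r\<^sup>2 + E + L^8" unfolding e0 using s1 L8 by linarith
    then show ?thesis using Npos by (simp add: pos_le_divide_eq)
  qed
  have t2: "2*L\<^sup>2*r \<le> (r\<^sup>2 + E + L^8) / N"
  proof -
    have e1: "2*L\<^sup>2*r*N = 2*((L\<^sup>2*N)*r)" by (simp add: mult_ac)
    have "2*L\<^sup>2*r*N \<le> r\<^sup>2 + E + L^8" unfolding e1 using s2 s3 L8 E0 by linarith
    then show ?thesis using Npos by (simp add: pos_le_divide_eq)
  qed
  have "(2*a+2*b)*r \<le> (2*(k*\<xi>\<^sup>2) + 2*(k*L\<^sup>2))*r"
    using assms by (intro mult_right_mono) auto
  also have "\<dots> = k*\<xi>\<^sup>2*(2*r) + k*(2*L\<^sup>2*r)" by (simp add: algebra_simps)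
  also have "\<dots> \<le> k*\<xi>\<^sup>2*((r\<^sup>2 + E + L^8)/N) + k*((r\<^sup>2 + E + L^8)/N)"
    using t1 t2 assms by (intro add_mono mult_left_mono) auto
  also have "\<dots> = (k*(\<xi>\<^sup>2+1))*((r\<^sup>2 + E + L^8)/N)" using lin3[of k "\<xi>\<^sup>2" "(r\<^sup>2 + E + L^8)/N"] .
  also have "\<dots> = k * (\<xi>\<^sup>2+1) / N * (r\<^sup>2 + E + L^8)" by simp
  finally show ?thesis .
qed

lemma sqdiff_meas:
  fixes f g :: "'a \<Rightarrow> real ^ 'k"
  assumes "f \<in> borel_measurable M" "g \<in> borel_measurable M"
  shows "(\<lambda>z. (norm (f z - g z))\<^sup>2) \<in> borel_measurable M"
proof -
  have "(\<lambda>z. f z - g z) \<in> borel_measurable M" using borel_measurable_diff assms by blast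
  then have "(\<lambda>z. norm (f z - g z)) \<in> borel_measurable M" by (rule measurable_compose[OF _ borel_measurable_norm])
  then show ?thesis by (rule borel_measurable_power)
qed

lemma enn_meas: "f \<in> borel_measurable M \<Longrightarrow> (\<lambda>x. ennreal (f x)) \<in> borel_measurable M"
  by (rule measurable_compose[OF _ measurable_ennreal])

lemma H_meas:
  fixes r0 :: "real^'d \<Rightarrow> real" and th :: "real^'d \<Rightarrow> real^'k"
  assumes r: "r0 \<in> borel_measurable S" and t: "th \<in> borel_measurable S" and l: "linf_norm \<in> borel_measurable S"
  shows "(\<lambda>x. (r0 x)\<^sup>2 + exp (\<sigma> * (linf_norm x)\<^sup>2) + linf_norm (th x) ^ 8) \<in> borel_measurable S"
    "(\<lambda>x. ennreal ((r0 x)\<^sup>2) + ennreal (exp (\<sigma> * (linf_norm x)\<^sup>2))) \<in> borel_measurable S"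
    "(\<lambda>x. ennreal ((r0 x)\<^sup>2)) \<in> borel_measurable S"
    "(\<lambda>x. ennreal (exp (\<sigma> * (linf_norm x)\<^sup>2))) \<in> borel_measurable S"
    "(\<lambda>x. ennreal (linf_norm (th x) ^ 8)) \<in> borel_measurable S"
proof -
  have m1: "(\<lambda>x. (r0 x)\<^sup>2) \<in> borel_measurable S" by (rule borel_measurable_power[OF r])
  have "(\<lambda>x. \<sigma> * (linf_norm x)\<^sup>2) \<in> borel_measurable S"
    by (rule borel_measurable_times[OF borel_measurable_const borel_measurable_power[OF l]])
  then have m2: "(\<lambda>x. exp (\<sigma> * (linf_norm x)\<^sup>2)) \<in> borel_measurable S"
    by (rule measurable_compose[OF _ borel_measurable_exp])
  have "(\<lambda>x. linf_norm (th x)) \<in> borel_measurable S"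
    by (rule measurable_compose[OF t linf_meas])
  then have m3: "(\<lambda>x. linf_norm (th x) ^ 8) \<in> borel_measurable S"
    by (rule borel_measurable_power)
  show "(\<lambda>x. (r0 x)\<^sup>2 + exp (\<sigma> * (linf_norm x)\<^sup>2) + linf_norm (th x) ^ 8) \<in> borel_measurable S"
    by (rule borel_measurable_add[OF borel_measurable_add[OF m1 m2] m3])
  show "(\<lambda>x. ennreal ((r0 x)\<^sup>2) + ennreal (exp (\<sigma> * (linf_norm x)\<^sup>2))) \<in> borel_measurable S"
    by (rule borel_measurable_add[OF enn_meas[OF m1] enn_meas[OF m2]])
  show "(\<lambda>x. ennreal ((r0 x)\<^sup>2)) \<in> borel_measurable S" by (rule enn_meas[OF m1])
  show "(\<lambda>x. ennreal (exp (\<sigma> * (linf_norm x)\<^sup>2))) \<in> borel_measurable S" by (rule enn_meas[OF m2])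
  show "(\<lambda>x. ennreal (linf_norm (th x) ^ 8)) \<in> borel_measurable S" by (rule enn_meas[OF m3])
qed

theorem proposition4p4:
  fixes P :: "'w measure"
    and p q :: "real ^ 'd \<Rightarrow> real"
    and \<theta>0 :: "real ^ 'd \<Rightarrow> real ^ 'k"
    and \<theta>h :: "nat \<Rightarrow> 'w \<Rightarrow> real ^ 'd \<Rightarrow> real ^ 'k"
    and \<xi> :: "nat \<Rightarrow> real"
    and c m :: real
  defines "S \<equiv> density lborel (\<lambda>x. ennreal (p x))"
      and "T \<equiv> density lborel (\<lambda>x. ennreal (q x))"
      and "r0 \<equiv> density_ratio p q"
  assumes P_prob: "prob_space P"
    and p_meas: "p \<in> borel_measurable lborel" and q_meas: "q \<in> borel_measurable lborel"
    and p_nonneg: "\<And>x. p x \<ge> 0" and q_nonneg: "\<And>x. q x \<ge> 0"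
    and S_prob: "prob_space S" and T_prob: "prob_space T"
    and supp: "{x. q x > 0} \<subseteq> {x. p x > 0}"
    and \<theta>0_meas: "\<theta>0 \<in> borel_measurable lborel"
    and \<theta>h_meas: "\<And>N. (\<lambda>z. \<theta>h N (fst z) (snd z)) \<in> borel_measurable (P \<Otimes>\<^sub>M lborel)"
    and i: "\<And>N. N \<ge> 1 \<Longrightarrow>
              (AE z in P \<Otimes>\<^sub>M S. linf_norm (\<theta>h N (fst z) (snd z)) \<le> \<xi> N)"
    and ii: "(\<integral>\<^sup>+ x. ennreal (linf_norm (\<theta>0 x) ^ 8) \<partial>S) < \<infinity>"
    and iii: "c > 0" "m \<ge> 0" "\<And>x. r0 x \<le> c * exp (m * linf_norm x)"
    and iv: "(\<integral>\<^sup>+ x. ennreal ((r0 x)\<^sup>2) \<partial>S) < \<infinity>"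
    and v: "\<exists>\<sigma>>0. (\<integral>\<^sup>+ x. ennreal (exp (\<sigma> * (linf_norm x)\<^sup>2)) \<partial>S) < \<infinity>"
  shows "\<exists>c1 c2 c3 :: real. \<forall>N\<ge>2.
     (\<integral>\<^sup>+ z. ennreal ((norm (\<theta>h N (fst z) (snd z) - \<theta>0 (snd z)))\<^sup>2) \<partial>(P \<Otimes>\<^sub>M T))
       = (\<integral>\<^sup>+ z. ennreal ((norm (\<theta>h N (fst z) (snd z) - \<theta>0 (snd z)))\<^sup>2 * r0 (snd z)) \<partial>(P \<Otimes>\<^sub>M S))
   \<and> (\<integral>\<^sup>+ z. ennreal ((norm (\<theta>h N (fst z) (snd z) - \<theta>0 (snd z)))\<^sup>2 * r0 (snd z)) \<partial>(P \<Otimes>\<^sub>M S))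
       \<le> ennreal (c1 * exp (c2 * sqrt (ln (real N))))
            * (\<integral>\<^sup>+ z. ennreal ((norm (\<theta>h N (fst z) (snd z) - \<theta>0 (snd z)))\<^sup>2) \<partial>(P \<Otimes>\<^sub>M S))
         + ennreal (c3 * real CARD('k) * ((\<xi> N)\<^sup>2 + 1) / real N)"
proof -
  obtain \<sigma> where \<sigma>: "\<sigma> > 0" and vfin: "(\<integral>\<^sup>+ x. ennreal (exp (\<sigma> * (linf_norm x)\<^sup>2)) \<partial>S) < \<infinity>"
    using v by blast
  have sets_S: "sets S = sets lborel" unfolding S_def by simp
  have sets_T: "sets T = sets lborel" unfolding T_def by simp
  have sfP: "sigma_finite_measure P" by (rule prob_space_imp_sigma_finite[OF P_prob])
  have sfS: "sigma_finite_measure S" by (rule prob_space_imp_sigma_finite[OF S_prob])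
  have sfT: "sigma_finite_measure T" by (rule prob_space_imp_sigma_finite[OF T_prob])
  have r0_nn: "r0 x \<ge> 0" for x
    unfolding r0_def by (rule dr_nonneg) (use p_nonneg q_nonneg in auto)
  have r0_meas': "r0 \<in> borel_measurable lborel"
    unfolding r0_def by (rule dr_meas[OF p_meas q_meas])
  define F where "F N z = (norm (\<theta>h N (fst z) (snd z) - \<theta>0 (snd z)))\<^sup>2" for N z
  have thS: "(\<lambda>z. \<theta>h N (fst z) (snd z)) \<in> borel_measurable (P \<Otimes>\<^sub>M S)" for N
    by (subst measurable_cong_sets[OF sets_pair_measure_cong[OF refl sets_S] refl]) (rule \<theta>h_meas)
  have thT: "(\<lambda>z. \<theta>h N (fst z) (snd z)) \<in> borel_measurable (P \<Otimes>\<^sub>M T)" for N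
    by (subst measurable_cong_sets[OF sets_pair_measure_cong[OF refl sets_T] refl]) (rule \<theta>h_meas)
  have th0S: "\<theta>0 \<in> borel_measurable S" 
    by (subst measurable_cong_sets[OF sets_S refl]) (rule \<theta>0_meas)
  have th0T: "\<theta>0 \<in> borel_measurable T" 
    by (subst measurable_cong_sets[OF sets_T refl]) (rule \<theta>0_meas)
  have r0S: "r0 \<in> borel_measurable S" 
    by (subst measurable_cong_sets[OF sets_S refl]) (rule r0_meas')
  have linfS: "linf_norm \<in> borel_measurable S" 
    by (subst measurable_cong_sets[OF sets_S refl], subst measurable_cong_sets[OF sets_lborel refl]) (rule linf_meas)
  have FS: "(\<lambda>z. F N z) \<in> borel_measurable (P \<Otimes>\<^sub>M S)" for N
    unfolding F_def by (rule sqdiff_meas[OF thS measurable_compose[OF measurable_snd th0S]])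
  have FT: "(\<lambda>z. F N z) \<in> borel_measurable (P \<Otimes>\<^sub>M T)" for N
    unfolding F_def by (rule sqdiff_meas[OF thT measurable_compose[OF measurable_snd th0T]])
  have thL: "(\<lambda>x. \<theta>h N w x) \<in> borel_measurable lborel" if "w \<in> space P" for N w
    using measurable_Pair2[OF \<theta>h_meas[of N] that] by simp
  have FL: "(\<lambda>x. F N (w, x)) \<in> borel_measurable lborel" if "w \<in> space P" for N w
    unfolding F_def fst_conv snd_conv by (rule sqdiff_meas[OF thL[OF that] \<theta>0_meas])
  have F_nn: "F N z \<ge> 0" for N z unfolding F_def by simp
  define H where "H x = (r0 x)\<^sup>2 + exp (\<sigma> * (linf_norm x)\<^sup>2) + linf_norm (\<theta>0 x) ^ 8" for x
  have H_nn: "H x \<ge> 0" for x unfolding H_def by simp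
  have HS: "(\<lambda>x. H x) \<in> borel_measurable S" unfolding H_def by (rule H_meas(1)[OF r0S th0S linfS])
  have mH: "(\<lambda>z. ennreal (H (snd z))) \<in> borel_measurable (P \<Otimes>\<^sub>M S)"
    by (rule enn_meas[OF measurable_compose[OF measurable_snd HS]])
  have intH: "(\<integral>\<^sup>+ x. ennreal (H x) \<partial>S) < \<infinity>"
  proof -
    have "(\<integral>\<^sup>+ x. ennreal (H x) \<partial>S) = (\<integral>\<^sup>+ x. ennreal ((r0 x)\<^sup>2) + ennreal (exp (\<sigma> * (linf_norm x)\<^sup>2)) + ennreal (linf_norm (\<theta>0 x) ^ 8) \<partial>S)"
      unfolding H_def by (intro nn_integral_cong) (simp add: linf_nonneg)
    also have "\<dots> = (\<integral>\<^sup>+ x. ennreal ((r0 x)\<^sup>2) \<partial>S) + (\<integral>\<^sup>+ x. ennreal (exp (\<sigma> * (linf_norm x)\<^sup>2)) \<partial>S) + (\<integral>\<^sup>+ x. ennreal (linf_norm (\<theta>0 x) ^ 8) \<partial>S)"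
      by (simp only: nn_integral_add[OF H_meas(2)[OF r0S th0S linfS] H_meas(5)[OF r0S th0S linfS]]
            nn_integral_add[OF H_meas(3)[OF r0S th0S linfS] H_meas(4)[OF r0S th0S linfS]])
    also have "\<dots> < \<infinity>" using iv vfin ii by (simp add: ennreal_add_less_top)
    finally show ?thesis .
  qed
  define c3 where "c3 = enn2real (\<integral>\<^sup>+ x. ennreal (H x) \<partial>S)"
  have c3_nn: "c3 \<ge> 0" unfolding c3_def by simp
  have c3eq: "(\<integral>\<^sup>+ x. ennreal (H x) \<partial>S) = ennreal c3" unfolding c3_def using intH by simp
  have intH2: "(\<integral>\<^sup>+ z. ennreal (H (snd z)) \<partial>(P \<Otimes>\<^sub>M S)) = ennreal c3"
  proof -
    have "(\<integral>\<^sup>+ z. ennreal (H (snd z)) \<partial>(P \<Otimes>\<^sub>M S)) = (\<integral>\<^sup>+ w. \<integral>\<^sup>+ x. ennreal (H x) \<partial>S \<partial>P)"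
      using sigma_finite_measure.nn_integral_fst[OF sfS mH] by simp
    also have "\<dots> = ennreal c3" using c3eq prob_space.emeasure_space_1[OF P_prob] by simp
    finally show ?thesis .
  qed
  define c2 where "c2 = m * sqrt (4 / \<sigma>)"
  show ?thesis
  proof (rule exI[of _ c], rule exI[of _ c2], rule exI[of _ c3], intro allI impI conjI)
    fix N :: nat assume N2: "N \<ge> 2"
    show "(\<integral>\<^sup>+ z. ennreal ((norm (\<theta>h N (fst z) (snd z) - \<theta>0 (snd z)))\<^sup>2) \<partial>(P \<Otimes>\<^sub>M T))
       = (\<integral>\<^sup>+ z. ennreal ((norm (\<theta>h N (fst z) (snd z) - \<theta>0 (snd z)))\<^sup>2 * r0 (snd z)) \<partial>(P \<Otimes>\<^sub>M S))"
    proof -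
      have "(\<integral>\<^sup>+ z. ennreal (F N z) \<partial>(P \<Otimes>\<^sub>M T)) = (\<integral>\<^sup>+ w. \<integral>\<^sup>+ x. ennreal (F N (w, x)) \<partial>T \<partial>P)"
        using sigma_finite_measure.nn_integral_fst[OF sfT enn_meas[OF FT[of N]]] by simp
      also have "\<dots> = (\<integral>\<^sup>+ w. \<integral>\<^sup>+ x. ennreal (q x) * ennreal (F N (w, x)) \<partial>lborel \<partial>P)"
      proof (rule nn_integral_cong)
        fix w assume w: "w \<in> space P"
        show "(\<integral>\<^sup>+ x. ennreal (F N (w, x)) \<partial>T) = (\<integral>\<^sup>+ x. ennreal (q x) * ennreal (F N (w, x)) \<partial>lborel)"
          unfolding T_def by (rule nn_integral_density[OF enn_meas[OF q_meas] enn_meas[OF FL[OF w]]])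
      qed
      also have "\<dots> = (\<integral>\<^sup>+ w. \<integral>\<^sup>+ x. ennreal (p x) * ennreal (F N (w, x) * r0 x) \<partial>lborel \<partial>P)"
      proof (intro nn_integral_cong)
        fix w x
        have "q x * F N (w, x) = p x * (F N (w, x) * r0 x)"
        proof (cases "p x = 0")
          case True
          have "\<not> (q x > 0)"
          proof
            assume "q x > 0"
            then have "x \<in> {x. p x > 0}" using supp by blast
            then show False using True by simp
          qed
          then have "q x = 0" using q_nonneg[of x] by simp
          then show ?thesis using True by simp
        next
          case False
          then show ?thesis unfolding r0_def density_ratio_def by simp
        qed
        note e = this
        have "ennreal (q x) * ennreal (F N (w, x)) = ennreal (q x * F N (w, x))"
          by (rule ennreal_mult[symmetric, OF q_nonneg F_nn])
        also have "\<dots> = ennreal (p x * (F N (w, x) * r0 x))" by (simp only: e)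
        also have "\<dots> = ennreal (p x) * ennreal (F N (w, x) * r0 x)"
          by (rule ennreal_mult[OF p_nonneg mult_nonneg_nonneg[OF F_nn r0_nn]])
        finally show "ennreal (q x) * ennreal (F N (w, x)) = ennreal (p x) * ennreal (F N (w, x) * r0 x)" .
      qed
      also have "\<dots> = (\<integral>\<^sup>+ w. \<integral>\<^sup>+ x. ennreal (F N (w, x) * r0 x) \<partial>S \<partial>P)"
      proof (rule nn_integral_cong)
        fix w assume w: "w \<in> space P"
        have "(\<lambda>x. F N (w, x) * r0 x) \<in> borel_measurable lborel"
          by (rule borel_measurable_times[OF FL[OF w] r0_meas'])
        then show "(\<integral>\<^sup>+ x. ennreal (p x) * ennreal (F N (w, x) * r0 x) \<partial>lborel) = (\<integral>\<^sup>+ x. ennreal (F N (w, x) * r0 x) \<partial>S)"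
          unfolding S_def by (rule nn_integral_density[OF enn_meas[OF p_meas] enn_meas, symmetric])
      qed
      also have "\<dots> = (\<integral>\<^sup>+ z. ennreal (F N z * r0 (snd z)) \<partial>(P \<Otimes>\<^sub>M S))"
        using sigma_finite_measure.nn_integral_fst[OF sfS enn_meas[OF borel_measurable_times[OF FS[of N] measurable_compose[OF measurable_snd r0S]]]] by simp
      finally show ?thesis unfolding F_def .
    qed
  next
    fix N :: nat assume N2: "N \<ge> 2"
    define n where "n = real N"
    have n2: "n \<ge> 2" using N2 unfolding n_def by simp
    have ln0: "ln n \<ge> 0" using n2 by simp
    define R where "R = sqrt (4 * ln n / \<sigma>)"
    have R0: "R \<ge> 0" unfolding R_def using ln0 \<sigma> by simp
    have R2: "\<sigma> * R\<^sup>2 = 4 * ln n" unfolding R_def using ln0 \<sigma> by simp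
    have expR: "exp (\<sigma> * R\<^sup>2) = n ^ 4"
      using R2 n2 exp_of_nat_mult[of 4 "ln n"] by simp
    define C0 where "C0 = c * exp (c2 * sqrt (ln n))"
    have mR: "c2 * sqrt (ln n) = m * R" unfolding c2_def R_def
      by (simp add: real_sqrt_mult[symmetric])
    have C0_nn: "C0 \<ge> 0" unfolding C0_def using iii by simp
    define k where "k = real CARD('k)"
    define K where "K = k * ((\<xi> N)\<^sup>2 + 1) / n"
    have K_nn: "K \<ge> 0" unfolding K_def k_def using n2 by simp
    have AEb: "AE z in P \<Otimes>\<^sub>M S. linf_norm (\<theta>h N (fst z) (snd z)) \<le> \<xi> N"
      using i[of N] N2 by simp
    have pw: "F N z * r0 (snd z) \<le> C0 * F N z + K * H (snd z)"
      if bnd: "linf_norm (\<theta>h N (fst z) (snd z)) \<le> \<xi> N" for z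
    proof -
      define x where "x = snd z"
      define u where "u = \<theta>h N (fst z) (snd z)"
      define v where "v = \<theta>0 x"
      define a where "a = (norm u)\<^sup>2"
      define b where "b = (norm v)\<^sup>2"
      have Fz: "F N z = (norm (u - v))\<^sup>2" unfolding F_def u_def v_def x_def by simp
      have F_nn: "F N z \<ge> 0" unfolding F_def by simp
      have Fab: "F N z \<le> 2*a + 2*b"
      proof -
        have "norm (u - v) \<le> norm u + norm v" by (rule norm_triangle_ineq4)
        then have "(norm (u - v))\<^sup>2 \<le> (norm u + norm v)\<^sup>2" by (simp add: power_mono)
        also have "\<dots> \<le> 2*a + 2*b"
        proof -
          have "0 \<le> (norm u - norm v)\<^sup>2" by simp
          then have "2*(norm u*norm v) \<le> a + b" unfolding a_def b_def by (simp add: power2_diff)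
          moreover have "(norm u + norm v)\<^sup>2 = a + b + 2*(norm u*norm v)"
            unfolding a_def b_def by (simp add: power2_sum)
          ultimately show ?thesis by linarith
        qed
        finally show ?thesis using Fz by simp
      qed
      have \<xi>0: "\<xi> N \<ge> 0" using bnd linf_nonneg[of u] unfolding u_def by linarith
      have lu: "(linf_norm u)\<^sup>2 \<le> (\<xi> N)\<^sup>2" using bnd linf_nonneg[of u] unfolding u_def
        by (simp add: power_mono)
      have ak: "a \<le> k * (\<xi> N)\<^sup>2" unfolding a_def k_def
      proof -
        have "real CARD('k) * (linf_norm u)\<^sup>2 \<le> real CARD('k) * (\<xi> N)\<^sup>2"
          by (rule mult_left_mono[OF lu]) simp
        then show "(norm u)\<^sup>2 \<le> real CARD('k) * (\<xi> N)\<^sup>2" using norm_sq_le[of u] by linarith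
      qed
      have bk: "b \<le> k * (linf_norm v)\<^sup>2" unfolding b_def k_def using norm_sq_le[of v] by simp
      have r_nn: "r0 x \<ge> 0" by (rule r0_nn)
      show ?thesis
      proof (cases "linf_norm x \<le> R")
        case True
        have "r0 x \<le> c * exp (m * linf_norm x)" using iii by simp
        also have "\<dots> \<le> c * exp (m * R)" using True iii by (simp add: mult_left_mono)
        also have "\<dots> = C0" unfolding C0_def mR ..
        finally have "r0 x \<le> C0" .
        then have "F N z * r0 x \<le> F N z * C0" using F_nn by (simp add: mult_left_mono)
        moreover have "K * H x \<ge> 0" using K_nn H_nn by simp
        ultimately show ?thesis unfolding x_def by (simp add: mult.commute)
      next
        case False
        then have "R\<^sup>2 \<le> (linf_norm x)\<^sup>2" using R0 by (simp add: power_mono)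
        then have "\<sigma> * R\<^sup>2 \<le> \<sigma> * (linf_norm x)\<^sup>2" using \<sigma> by simp
        then have E: "n ^ 4 \<le> exp (\<sigma> * (linf_norm x)\<^sup>2)" using expR by (metis exp_le_cancel_iff)
        have "F N z * r0 x \<le> (2*a+2*b) * r0 x" using Fab r_nn by (simp add: mult_right_mono)
        also have "\<dots> \<le> k * ((\<xi> N)\<^sup>2+1) / n * ((r0 x)\<^sup>2 + exp (\<sigma> * (linf_norm x)\<^sup>2) + linf_norm v ^ 8)"
          by (rule tail_bound) (use n2 \<xi>0 r_nn linf_nonneg E ak bk in \<open>auto simp: k_def a_def b_def\<close>)
        also have "\<dots> = K * H x" unfolding K_def H_def v_def by simp
        finally have "F N z * r0 x \<le> K * H x" .
        moreover have "C0 * F N z \<ge> 0" using C0_nn F_nn by simp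
        ultimately show ?thesis unfolding x_def by simp
      qed
    qed
    have KH: "ennreal K * (\<integral>\<^sup>+ z. ennreal (H (snd z)) \<partial>(P \<Otimes>\<^sub>M S)) = ennreal (c3 * real CARD('k) * ((\<xi> N)\<^sup>2 + 1) / real N)"
    proof -
      have "ennreal K * (\<integral>\<^sup>+ z. ennreal (H (snd z)) \<partial>(P \<Otimes>\<^sub>M S)) = ennreal (K * c3)"
        unfolding intH2 by (rule ennreal_mult[OF K_nn c3_nn, symmetric])
      also have "K * c3 = c3 * real CARD('k) * ((\<xi> N)\<^sup>2 + 1) / real N"
        by (simp add: K_def k_def n_def ac_simps)
      finally show ?thesis .
    qed
    have "(\<integral>\<^sup>+ z. ennreal (F N z * r0 (snd z)) \<partial>(P \<Otimes>\<^sub>M S))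
        \<le> (\<integral>\<^sup>+ z. ennreal C0 * ennreal (F N z) + ennreal K * ennreal (H (snd z)) \<partial>(P \<Otimes>\<^sub>M S))"
    proof (rule nn_integral_mono_AE)
      show "AE z in P \<Otimes>\<^sub>M S. ennreal (F N z * r0 (snd z)) \<le> ennreal C0 * ennreal (F N z) + ennreal K * ennreal (H (snd z))"
        using AEb
      proof eventually_elim
        case (elim z)
        have "ennreal (F N z * r0 (snd z)) \<le> ennreal (C0 * F N z + K * H (snd z))"
          using pw[OF elim] by (rule ennreal_leI)
        also have "\<dots> = ennreal C0 * ennreal (F N z) + ennreal K * ennreal (H (snd z))"
          using C0_nn K_nn H_nn[of "snd z"] F_nn[of N z] by (simp add: ennreal_mult)
        finally show ?case .
      qed
    qed
    also have "\<dots> = ennreal C0 * (\<integral>\<^sup>+ z. ennreal (F N z) \<partial>(P \<Otimes>\<^sub>M S)) + ennreal K * (\<integral>\<^sup>+ z. ennreal (H (snd z)) \<partial>(P \<Otimes>\<^sub>M S))"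
      by (simp only: nn_integral_linear[OF enn_meas[OF FS[of N]] borel_measurable_times_ennreal[OF borel_measurable_const mH]]
           nn_integral_cmult[OF mH])
    also have "\<dots> = ennreal C0 * (\<integral>\<^sup>+ z. ennreal (F N z) \<partial>(P \<Otimes>\<^sub>M S)) + ennreal (c3 * real CARD('k) * ((\<xi> N)\<^sup>2 + 1) / real N)"
      by (simp only: KH)
    finally show "(\<integral>\<^sup>+ z. ennreal ((norm (\<theta>h N (fst z) (snd z) - \<theta>0 (snd z)))\<^sup>2 * r0 (snd z)) \<partial>(P \<Otimes>\<^sub>M S))
       \<le> ennreal (c * exp (c2 * sqrt (ln (real N))))
            * (\<integral>\<^sup>+ z. ennreal ((norm (\<theta>h N (fst z) (snd z) - \<theta>0 (snd z)))\<^sup>2) \<partial>(P \<Otimes>\<^sub>M S))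
         + ennreal (c3 * real CARD('k) * ((\<xi> N)\<^sup>2 + 1) / real N)"
      by (simp only: F_def C0_def n_def)
  qed
qed

end
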